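(* Consider the UAV-SAR coverage maximization problem (P.1) described in the context, with all system parameters fixed (in particular $\delta_t>0$, $P_{\mathrm{prop}}>0$, $q_{\mathrm{start}}\ge 0$ finite, and $M$ a fixed positive integer). Then the set of numbers of azimuth sweeps $N\in\mathbb{N}$ for which problem (P.1) with that $N$ has a feasible point is finite.
   Context: Fixed system parameters: a time-slot duration $\delta_t>0$; a UAV speed $v>0$; $\Delta_y=\delta_t v$; a positive integer $M$ (number of time slots per azimuth sweep, with $L=M\Delta_y$); a radar depression angle $\theta_d$ and 3dB beamwidth $\Theta_{3\mathrm{dB}}$, with $\theta_1=\theta_d-\Theta_{3\mathrm{dB}}/2$ and $\theta_2=\theta_d+\Theta_{3\mathrm{dB}}/2$; altitude bounds $0<z_{\min}\le z_{\max}$; maximal powers $P_{\mathrm{sar}}^{\max},P_{\mathrm{com}}^{\max}\ge 0$; a constant propulsion power $P_{\mathrm{prop}}>0$; an initial battery energy $q_{\mathrm{start}}\ge 0$; a base station position $\mathbf b=(x_b,y_b,z_b)$; positive constants $B_r,B_c,\tau_p,\mathrm{PRF},c,\gamma,R_{\mathrm{sl}},\mathrm{SNR}_{\min}$ and a positive constant $K$ (collecting $G_tG_r\lambda^3\sigma_0 c\tau_p\mathrm{PRF}\sin^2(\theta_d)/((4\pi)^4 k T_o NF B_r L_{\mathrm{tot}} v)$); and $\Omega=\frac{\cos\theta_1-\cos\theta_2}{\cos\theta_1\cos\theta_2}$. For a given number of azimuth sweeps $N\in\mathbb{N}$, time slots are indexed by $n\in\{1,\dots,NM\}$. Let $\mathcal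 A=\{k\in\{1,\dots,NM\}:(k-1)\bmod M\neq 0\}$ and $\mathcal A^c=\{1,M+1,\dots,(N-1)M+1\}$. The $y$-coordinates are fixed: $y(1)=0$, $y(n+1)=y(n)+c(n)\Delta_y$ for $n\in\{1,\dots,NM-1\}$, where $c(n)=1$ if $\lceil n/M\rceil$ is odd and $c(n)=-1$ otherwise. The optimization variables are real vectors $x(n),z(n),q(n),P_{\mathrm{sar}}(n),P_{\mathrm{com}}(n)$, $n=1,\dots,NM$. Define $d(n)=\sqrt{(x(n)-x_b)^2+(y(n)-y_b)^2+(z(n)-z_b)^2}$, $R(n)=B_c\log_2\!\big(1+\frac{P_{\mathrm{com}}(n)\gamma}{d^2(n)}\big)$, $R_{\min}(n)=B_r\big(\frac{2z(n)\Omega}{c}+\tau_p\big)\mathrm{PRF}$, and $\mathrm{SNR}(n)=\frac{K\,P_{\mathrm{sar}}(n)}{z(n)^3}$. Problem (P.1) for given $N$: maximize $C=\sum_{n=1}^{NM}\Delta_y z(n)(\tan\theta_2-\tan\theta_1)$ subject to C1: $x(1)=-\tan(\theta_1)z(1)$; C2: $x(n)=x(n-1)+z(n-1)\tan\theta_2-z(n)\tan\theta_1$ for all $n\in\mathcal A^c\setminus\{1\}$; C3: $x(n+1)=x(n)$ for all $n\in\mathcal A$; C4: $z(n+1)=z(n)$ for all $n\in\mathcal A$; C5: $P_{\mathrm{sar}}(n+1)=P_{\mathrm{sar}}(n)$ for all $n\in\mathcal A$; C6: $z_{\min}\le z(n)\le z_{\max}$ for all $n$; C7: $\mathrm{SNR}(n)\ge\mathrm{SNR}_{\min}$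 for all $n$; C8: $R(n)\ge R_{\min}(n)+R_{\mathrm{sl}}$ for all $n$; C9: $0\le P_{\mathrm{sar}}(n)\le P_{\mathrm{sar}}^{\max}$ and $0\le P_{\mathrm{com}}(n)\le P_{\mathrm{com}}^{\max}$ for all $n$; C10: $q(1)=q_{\mathrm{start}}$ and $q(n)\ge 0$ for all $n$; C11: $q(n+1)=q(n)-\delta_t\big(P_{\mathrm{com}}(n)+P_{\mathrm{sar}}(n)+P_{\mathrm{prop}}\big)$ for all $n\in\{1,\dots,NM-1\}$. A feasible point for $N$ is an assignment of the variables satisfying C1–C11. *)

theory Defs
  imports Complex_Main
begin

record uav_params =
  dt :: real
  vel :: real
  Mslots :: nat       (* M, time slots per azimuth sweep *)
  theta_d :: real     (* depression angle *)
  theta_3dB :: real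
  z_min :: real
  z_max :: real
  Psar_max :: real
  Pcom_max :: real
  P_prop :: real
  q_start :: real
  x_b :: real
  y_b :: real
  z_b :: real
  B_r :: real
  B_c :: real
  tau_p :: real
  PRF :: real
  c_light :: real
  gamma_c :: real
  R_sl :: real
  SNR_min :: real
  K_const :: real

definition Delta_y :: "uav_params \<Rightarrow> real" where
  "Delta_y p = dt p * vel p"

definition theta1 :: "uav_params \<Rightarrow> real" where
  "theta1 p = theta_d p - theta_3dB p / 2"

definition theta2 :: "uav_params \<Rightarrow> real" where
  "theta2 p = theta_d p + theta_3dB p / 2"

definition Omega :: "uav_params \<Rightarrow> real" where
  "Omega p = (cos (theta1 p) - cos (theta2 p)) / (cos (theta1 p) * cos (theta2 p))"

definition cdir :: "uav_params \<Rightarrow> nat \<Rightarrow> real" where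
  "cdir p n = (if odd (\<lceil>real n / real (Mslots p)\<rceil>) then 1 else -1)"

text \<open>Fixed y-coordinates: y(1) = 0, y(n+1) = y(n) + c(n) Delta_y.\<close>
definition ycoord :: "uav_params \<Rightarrow> nat \<Rightarrow> real" where
  "ycoord p n = (\<Sum>k=1..<n. cdir p k * Delta_y p)"

definition setA :: "uav_params \<Rightarrow> nat \<Rightarrow> nat set" where
  "setA p N = {k \<in> {1..N * Mslots p}. (k - 1) mod Mslots p \<noteq> 0}"

definition setAc :: "uav_params \<Rightarrow> nat \<Rightarrow> nat set" where
  "setAc p N = {j * Mslots p + 1 | j. j < N}"

definition dist_bs :: "uav_params \<Rightarrow> (nat \<Rightarrow> real) \<Rightarrow> (nat \<Rightarrow> real) \<Rightarrow> nat \<Rightarrow> real" where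
  "dist_bs p x z n = sqrt ((x n - x_b p)^2 + (ycoord p n - y_b p)^2 + (z n - z_b p)^2)"

definition rate :: "uav_params \<Rightarrow> (nat \<Rightarrow> real) \<Rightarrow> (nat \<Rightarrow> real) \<Rightarrow> (nat \<Rightarrow> real) \<Rightarrow> nat \<Rightarrow> real" where
  "rate p x z Pcom n = B_c p * log 2 (1 + Pcom n * gamma_c p / (dist_bs p x z n)^2)"

definition R_min :: "uav_params \<Rightarrow> (nat \<Rightarrow> real) \<Rightarrow> nat \<Rightarrow> real" where
  "R_min p z n = B_r p * (2 * z n * Omega p / c_light p + tau_p p) * PRF p"

definition SNR :: "uav_params \<Rightarrow> (nat \<Rightarrow> real) \<Rightarrow> (nat \<Rightarrow> real) \<Rightarrow> nat \<Rightarrow> real" where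
  "SNR p z Psar n = K_const p * Psar n / (z n)^3"

text \<open>Feasible point of (P.1) for N sweeps: variables indexed by n = 1..NM
  (functions on nat; values outside this range are unconstrained except where
  a constraint literally refers to them).\<close>
definition feasible_point :: "uav_params \<Rightarrow> nat \<Rightarrow> (nat \<Rightarrow> real) \<Rightarrow> (nat \<Rightarrow> real)
    \<Rightarrow> (nat \<Rightarrow> real) \<Rightarrow> (nat \<Rightarrow> real) \<Rightarrow> (nat \<Rightarrow> real) \<Rightarrow> bool" where
  "feasible_point p N x z q Psar Pcom \<longleftrightarrow>
     x 1 = - tan (theta1 p) * z 1 \<and>
     (\<forall>n \<in> setAc p N - {1}. x n = x (n - 1) + z (n - 1) * tan (theta2 p) - z n * tan (theta1 p)) \<and>
     (\<forall>n \<in> setA p N. x (n + 1) = x n) \<and>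
     (\<forall>n \<in> setA p N. z (n + 1) = z n) \<and>
     (\<forall>n \<in> setA p N. Psar (n + 1) = Psar n) \<and>
     (\<forall>n \<in> {1..N * Mslots p}. z_min p \<le> z n \<and> z n \<le> z_max p) \<and>
     (\<forall>n \<in> {1..N * Mslots p}. SNR p z Psar n \<ge> SNR_min p) \<and>
     (\<forall>n \<in> {1..N * Mslots p}. rate p x z Pcom n \<ge> R_min p z n + R_sl p) \<and>
     (\<forall>n \<in> {1..N * Mslots p}. 0 \<le> Psar n \<and> Psar n \<le> Psar_max p \<and>
                                 0 \<le> Pcom n \<and> Pcom n \<le> Pcom_max p) \<and>
     q 1 = q_start p \<and> (\<forall>n \<in> {1..N * Mslots p}. q n \<ge> 0) \<and>
     (\<forall>n \<in> {1..<N * Mslots p}. q (n + 1) = q n - dt p * (Pcom n + Psar n + P_prop p))"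

definition P1_feasible :: "uav_params \<Rightarrow> nat \<Rightarrow> bool" where
  "P1_feasible p N \<longleftrightarrow> (\<exists>x z q Psar Pcom. feasible_point p N x z q Psar Pcom)"

end

theory Submission
  imports Defs
begin

lemma energy_bound:
  assumes fp: "feasible_point p N x z q Psar Pcom" and dt: "dt p > 0" and pp: "P_prop p > 0"
  shows "\<forall>n. 1 \<le> n \<and> n \<le> N * Mslots p \<longrightarrow> q n \<le> q_start p - dt p * P_prop p * (real n - 1)"
proof (intro allI)
  fix n show "1 \<le> n \<and> n \<le> N * Mslots p \<longrightarrow> q n \<le> q_start p - dt p * P_prop p * (real n - 1)"
  proof (induction n)
    case 0 then show ?case by simp
  next
    case (Suc m)
    show ?case
    proof (cases "m = 0")
      case True then show ?thesis using fp by (simp add: feasible_point_def)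
    next
      case False
      show ?thesis
      proof
        assume h: "1 \<le> Suc m \<and> Suc m \<le> N * Mslots p"
        have m1: "m \<in> {1..<N * Mslots p}" using h False by auto
        have m2: "m \<in> {1..N * Mslots p}" using h False by auto
        have eq: "q (m + 1) = q m - dt p * (Pcom m + Psar m + P_prop p)"
          using fp m1 unfolding feasible_point_def by blast
        have nn: "0 \<le> Psar m \<and> 0 \<le> Pcom m" using fp m2 unfolding feasible_point_def by blast
        have ih: "q m \<le> q_start p - dt p * P_prop p * (real m - 1)" using Suc.IH h False by auto
        have "dt p * (Pcom m + Psar m + P_prop p) \<ge> dt p * P_prop p"
          using nn dt by (intro mult_left_mono) auto
        then show "q (Suc m) \<le> q_start p - dt p * P_prop p * (real (Suc m) - 1)"
          using eq ih by (simp add: algebra_simps)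
      qed
    qed
  qed
qed

theorem proposition1:
  fixes p :: uav_params
  assumes "dt p > 0" and "vel p > 0" and "Mslots p > 0"
    and "0 < z_min p" and "z_min p \<le> z_max p"
    and "Psar_max p \<ge> 0" and "Pcom_max p \<ge> 0"
    and "P_prop p > 0" and "q_start p \<ge> 0"
    and "B_r p > 0" and "B_c p > 0" and "tau_p p > 0" and "PRF p > 0"
    and "c_light p > 0" and "gamma_c p > 0" and "R_sl p > 0"
    and "SNR_min p > 0" and "K_const p > 0"
  shows "finite {N :: nat. P1_feasible p N}"
proof -
  define B where "B = q_start p / (dt p * P_prop p) + 1"
  have pos: "dt p * P_prop p > 0" using assms(1,8) by simp
  have sub: "{N :: nat. P1_feasible p N} \<subseteq> {..nat (ceiling B)}"
  proof
    fix N assume "N \<in> {N :: nat. P1_feasible p N}"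
    then obtain x z q Psar Pcom where fp: "feasible_point p N x z q Psar Pcom"
      unfolding P1_feasible_def by blast
    show "N \<in> {..nat (ceiling B)}"
    proof (cases "N = 0")
      case True then show ?thesis by simp
    next
      case False
      let ?n = "N * Mslots p"
      have n1: "1 \<le> ?n" using False assms(3) by simp
      have "q ?n \<le> q_start p - dt p * P_prop p * (real ?n - 1)"
        using energy_bound[OF fp assms(1,8)] n1 by blast
      moreover have "q ?n \<ge> 0" using fp n1 unfolding feasible_point_def by auto
      ultimately have "dt p * P_prop p * (real ?n - 1) \<le> q_start p" by linarith
      hence "real ?n - 1 \<le> q_start p / (dt p * P_prop p)" using pos
        by (simp add: pos_le_divide_eq mult.commute)
      hence "real ?n \<le> B" unfolding B_def by linarith
      moreover have "N \<le> ?n" using assms(3) by simp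
      ultimately have "real N \<le> B" by (meson of_nat_le_iff order_trans)
      hence "real N \<le> real (nat (ceiling B))" by linarith
      then show ?thesis by simp
    qed
  qed
  show ?thesis by (rule finite_subset[OF sub]) simp
qed

end
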